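(* For any $S\subseteq V$ and any $S$-restricted tree cover $\mathcal{T}(S)$ of $G$, the number of vertices of $V$ that have pseudo-degree greater than $s$ in some tree of $\mathcal{T}(S)$ is at most $\frac{|S|}{2d^{c+1}}$, i.e. $|\mathrm{Hi}(\mathcal{T}(S))|\le \frac{|S|}{2d^{c+1}}$.
   Context: $G=(V,E)$ is an undirected graph with $n\ge 3$ vertices and positive real edge weights; $\delta(u,v)$ denotes the distance in $G$. Let $k=\ln n$. For $S\subseteq V$, an $S$-restricted tree cover of $G$ is a family $\{T(w):w\in S\}$ of trees, where $T(w)$ is a subtree of $G$ (with $G$'s edge weights) rooted at $w$, such that: (i) for every $u\in S$, $v\in V$ there is $w\in S$ with $u,v\in V(T(w))$ and $\mathrm{dep}_{T(w)}(u)+\mathrm{dep}_{T(w)}(v)\le(2k-1)\delta(u,v)$, where $\mathrm{dep}_T(x)$ is the weighted distance in $T$ from $x$ to the root; (ii) every vertex of $V$ lies in at most $kn^{1/k}(\ln n+1)\ (\le 2e\ln^2 n)$ trees of the family. For a tree $T$ of the family, a vertex $v\in V(T)$ is a trunk vertex if there are $u,w\in S$ such that $v$ lies on the path from $u$ to $w$ in $T$; $\mathrm{Trunk}(T)$ is the subtree of $T$ induced by its trunk vertices; the pseudo-degree $\mathrm{pdeg}_T(v)$ of $v\in V(T)$ is its degree in $\mathrm{Trunk}(T)$ (and $0$ if $v$ is not a trunk vertex). Fix an integer $d\ge 2$ and a constant $c\ge 1$, and let $s=4e\cdot d^{c+1}\ln^2 n+1$. $\mathrm{Hi}(\mathcal{T}(S))$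 is the set of vertices of $V$ having pseudo-degree $>s$ in some tree of $\mathcal{T}(S)$. *)

theory Defs
  imports Complex_Main
begin

definition wgraph :: "'a set \<Rightarrow> 'a set set \<Rightarrow> ('a set \<Rightarrow> real) \<Rightarrow> bool" where
  "wgraph V E w \<longleftrightarrow> finite V \<and> (\<forall>e\<in>E. e \<subseteq> V \<and> card e = 2 \<and> w e > 0)"

definition walk :: "'a set set \<Rightarrow> 'a list \<Rightarrow> bool" where
  "walk F xs \<longleftrightarrow> xs \<noteq> [] \<and> (\<forall>i. Suc i < length xs \<longrightarrow> {xs ! i, xs ! Suc i} \<in> F)"

definition walk_weight :: "('a set \<Rightarrow> real) \<Rightarrow> 'a list \<Rightarrow> real" where
  "walk_weight w xs = (\<Sum>i<length xs - 1. w {xs ! i, xs ! Suc i})"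

definition wdist :: "'a set set \<Rightarrow> ('a set \<Rightarrow> real) \<Rightarrow> 'a \<Rightarrow> 'a \<Rightarrow> real" where
  "wdist F w x y = Inf {walk_weight w xs | xs. walk F xs \<and> hd xs = x \<and> last xs = y}"

definition connected_on :: "'a set \<Rightarrow> 'a set set \<Rightarrow> bool" where
  "connected_on V F \<longleftrightarrow> (\<forall>x\<in>V. \<forall>y\<in>V. \<exists>xs. walk F xs \<and> hd xs = x \<and> last xs = y)"

definition has_cycle :: "'a set set \<Rightarrow> bool" where
  "has_cycle F \<longleftrightarrow> (\<exists>xs. walk F xs \<and> distinct xs \<and> length xs \<ge> 3 \<and> {last xs, hd xs} \<in> F)"

definition subtree_of :: "'a set \<Rightarrow> 'a set set \<Rightarrow> 'a set \<times> 'a set set \<Rightarrow> bool" where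
  "subtree_of V E T \<longleftrightarrow> fst T \<subseteq> V \<and> snd T \<subseteq> E \<and> (\<forall>e\<in>snd T. e \<subseteq> fst T)
     \<and> connected_on (fst T) (snd T) \<and> \<not> has_cycle (snd T)"

definition dep :: "('a set \<Rightarrow> real) \<Rightarrow> 'a set \<times> 'a set set \<Rightarrow> 'a \<Rightarrow> 'a \<Rightarrow> real" where
  "dep w T r x = wdist (snd T) w x r"

definition restricted_tree_cover ::
  "'a set \<Rightarrow> 'a set set \<Rightarrow> ('a set \<Rightarrow> real) \<Rightarrow> 'a set \<Rightarrow> ('a \<Rightarrow> 'a set \<times> 'a set set) \<Rightarrow> bool" where
  "restricted_tree_cover V E w S T \<longleftrightarrow>
     (let n = real (card V); k = ln n in
       (\<forall>r\<in>S. subtree_of V E (T r) \<and> r \<in> fst (T r)) \<and>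
       (\<forall>u\<in>S. \<forall>v\<in>V. \<exists>r\<in>S. u \<in> fst (T r) \<and> v \<in> fst (T r) \<and>
            dep w (T r) r u + dep w (T r) r v \<le> (2 * k - 1) * wdist E w u v) \<and>
       (\<forall>v\<in>V. real (card {r\<in>S. v \<in> fst (T r)}) \<le> k * n powr (1 / k) * (ln n + 1)))"

definition trunk :: "'a set \<Rightarrow> 'a set \<times> 'a set set \<Rightarrow> 'a set" where
  "trunk S T = {v. \<exists>u\<in>S. \<exists>x\<in>S. u \<in> fst T \<and> x \<in> fst T \<and>
       (\<exists>xs. walk (snd T) xs \<and> distinct xs \<and> hd xs = u \<and> last xs = x \<and> v \<in> set xs)}"

text \<open>Pseudo-degree: degree in the subtree of T induced by the trunk vertices
  (automatically 0 for non-trunk vertices).\<close>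
definition pdeg :: "'a set \<Rightarrow> 'a set \<times> 'a set set \<Rightarrow> 'a \<Rightarrow> nat" where
  "pdeg S T v = card {e\<in>snd T. v \<in> e \<and> e \<subseteq> trunk S T}"

definition Hi :: "'a set \<Rightarrow> 'a set \<Rightarrow> ('a \<Rightarrow> 'a set \<times> 'a set set) \<Rightarrow> real \<Rightarrow> 'a set" where
  "Hi V S T s = {v\<in>V. \<exists>r\<in>S. real (pdeg S (T r) v) > s}"

end

theory Submission
  imports Defs "HOL-Analysis.Complex_Transcendental"
begin

definition dg :: "'a set set \<Rightarrow> 'a \<Rightarrow> nat" where
  "dg F v = card {e\<in>F. v \<in> e}"

lemma walk_mono: "walk F xs \<Longrightarrow> F \<subseteq> G \<Longrightarrow> walk G xs"
  unfolding walk_def by blast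

lemma acyc_mono: "\<not> has_cycle G \<Longrightarrow> F \<subseteq> G \<Longrightarrow> \<not> has_cycle F"
  unfolding has_cycle_def using walk_mono by blast

lemma walk_take: "walk F xs \<Longrightarrow> 0 < j \<Longrightarrow> walk F (take j xs)"
  unfolding walk_def by auto

lemma walk_set_sub:
  assumes "walk F xs" "length xs \<ge> 2" shows "set xs \<subseteq> \<Union>F"
proof
  fix y assume "y \<in> set xs"
  then obtain i where i: "i < length xs" "xs ! i = y" by (meson in_set_conv_nth)
  show "y \<in> \<Union>F"
  proof (cases "Suc i < length xs")
    case True
    then have "{xs!i, xs!Suc i} \<in> F" using assms unfolding walk_def by blast
    then show ?thesis using i by blast
  next
    case False
    then have "i = Suc (i - 1)" "Suc (i-1) < length xs" using i assms by auto
    then have "{xs!(i-1), xs!i} \<in> F" using assms unfolding walk_def by metis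
    then show ?thesis using i by blast
  qed
qed

lemma leaf_exists:
  assumes fin: "finite F" and two: "\<forall>e\<in>F. card e = 2" and ne: "F \<noteq> {}"
    and ac: "\<not> has_cycle F"
  shows "\<exists>v e. e \<in> F \<and> v \<in> e \<and> {e'\<in>F. v \<in> e'} = {e}"
proof -
  define P where "P = (\<lambda>n. \<exists>xs. walk F xs \<and> distinct xs \<and> length xs \<ge> 2 \<and> length xs = n)"
  have finU: "finite (\<Union>F)" using fin two by (metis card_eq_0_iff finite_Union zero_neq_numeral)
  obtain e where e: "e \<in> F" using ne by blast
  then obtain a b where ab: "e = {a,b}" "a \<noteq> b" using two by (meson card_2_iff)
  have "walk F [a,b]" using e ab unfolding walk_def by auto
  then have P2: "P 2" unfolding P_def using ab by (intro exI[of _ "[a,b]"]) auto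
  have bnd: "\<forall>y. P y \<longrightarrow> y \<le> card (\<Union>F)"
  proof (intro allI impI)
    fix y assume "P y"
    then obtain xs where xs: "walk F xs" "distinct xs" "length xs \<ge> 2" "length xs = y"
      unfolding P_def by blast
    have "length xs = card (set xs)" using xs(2) by (simp add: distinct_card)
    also have "\<dots> \<le> card (\<Union>F)" using walk_set_sub[OF xs(1,3)] finU by (simp add: card_mono)
    finally show "y \<le> card (\<Union>F)" using xs by simp
  qed
  obtain m where m: "P m" "\<forall>y. P y \<longrightarrow> y \<le> m" using Nat.ex_has_greatest_nat[OF P2 bnd] by blast
  then obtain xs where xs: "walk F xs" "distinct xs" "length xs \<ge> 2" "length xs = m"
    unfolding P_def by blast
  define v where "v = xs ! 0"
  define e0 where "e0 = {xs!0, xs!1}"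
  have e0F: "e0 \<in> F" using xs unfolding walk_def e0_def by auto
  have "{e'\<in>F. v \<in> e'} = {e0}"
  proof (rule ccontr)
    assume "{e'\<in>F. v \<in> e'} \<noteq> {e0}"
    moreover have "e0 \<in> {e'\<in>F. v \<in> e'}" using e0F unfolding e0_def v_def by auto
    ultimately obtain e' where e': "e' \<in> F" "v \<in> e'" "e' \<noteq> e0" by blast
    then obtain y where y: "e' = {v, y}" "y \<noteq> v" using two
      by (metis card_2_iff insert_commute insert_iff singletonD)
    have yne1: "y \<noteq> xs ! 1" using e' y unfolding e0_def v_def by auto
    show False
    proof (cases "y \<in> set xs")
      case False
      have "walk F (y # xs)" unfolding walk_def
      proof (intro conjI allI impI)
        fix i assume i: "Suc i < length (y # xs)"
        show "{(y # xs) ! i, (y # xs) ! Suc i} \<in> F"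
        proof (cases i)
          case 0
          then show ?thesis using e' y v_def by (simp add: insert_commute)
        next
          case (Suc k)
          then show ?thesis using xs(1) i unfolding walk_def by (metis Suc_less_eq length_Cons nth_Cons_Suc)
        qed
      qed simp
      then have "P (Suc m)" unfolding P_def using xs False by (intro exI[of _ "y # xs"]) auto
      then show False using m by auto
    next
      case True
      then obtain j where j: "j < length xs" "xs ! j = y" by (meson in_set_conv_nth)
      have "j \<noteq> 0" using j y v_def by (metis gr0I)
      moreover have "j \<noteq> 1" using j yne1 by auto
      ultimately have j2: "j \<ge> 2" by auto
      define ys where "ys = take (Suc j) xs"
      have "walk F ys" unfolding ys_def using walk_take[OF xs(1)] by auto
      moreover have "distinct ys" unfolding ys_def using xs(2) by simp
      moreover have "length ys \<ge> 3" unfolding ys_def using j j2 by simp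
      moreover have "last ys = y" unfolding ys_def using j by (simp add: take_Suc_conv_app_nth)
      moreover have "hd ys = v" unfolding ys_def v_def using j by (metis hd_conv_nth hd_take length_greater_0_conv list.size(3) not_less_zero zero_less_Suc)
      ultimately have "has_cycle F" unfolding has_cycle_def using e' y
        by (intro exI[of _ ys]) (auto simp: insert_commute)
      then show False using ac by simp
    qed
  qed
  then show ?thesis using e0F unfolding e0_def v_def by auto
qed

lemma forest_count:
  "finite F \<Longrightarrow> \<forall>e\<in>F. card e = 2 \<Longrightarrow> \<not> has_cycle F \<Longrightarrow> F \<noteq> {} \<Longrightarrow> card F + 1 \<le> card (\<Union>F)"
proof (induction "card F" arbitrary: F rule: less_induct)
  case less
  obtain v e where ve: "e \<in> F" "v \<in> e" "{e'\<in>F. v \<in> e'} = {e}"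
    using leaf_exists[of F] less.prems by blast
  have finU: "finite (\<Union>F)" using less.prems by (metis card_eq_0_iff finite_Union zero_neq_numeral)
  show ?case
  proof (cases "F - {e} = {}")
    case True
    then have "F = {e}" using ve by auto
    then show ?thesis using less.prems by simp
  next
    case False
    have "card (F - {e}) < card F" using ve less.prems by (meson card_Diff1_less)
    then have IH: "card (F - {e}) + 1 \<le> card (\<Union>(F - {e}))"
      using less.hyps[of "F - {e}"] less.prems False acyc_mono[of F "F - {e}"] by auto
    have "\<Union>(F - {e}) \<subseteq> \<Union>F - {v}" using ve by blast
    then have "card (\<Union>(F - {e})) \<le> card (\<Union>F - {v})" using finU by (simp add: card_mono)
    also have "\<dots> = card (\<Union>F) - 1" using ve by (intro card_Diff_singleton) blast
    finally have "card (\<Union>(F - {e})) \<le> card (\<Union>F) - 1" .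
    moreover have "card (F - {e}) = card F - 1" using ve by simp
    moreover have "card F \<ge> 1" using ve less.prems by (metis card_0_eq less_one not_le empty_iff)
    ultimately show ?thesis using IH by linarith
  qed
qed

lemma deg_sum:
  assumes "finite F" "\<forall>e\<in>F. card e = 2"
  shows "(\<Sum>v\<in>\<Union>F. dg F v) = 2 * card F"
proof -
  have finU: "finite (\<Union>F)" using assms by (metis card_eq_0_iff finite_Union zero_neq_numeral)
  have "(\<Sum>v\<in>\<Union>F. dg F v) = (\<Sum>v\<in>\<Union>F. \<Sum>e\<in>F. if v \<in> e then 1 else 0)"
    unfolding dg_def using assms(1) by (auto simp: sum.If_cases intro!: sum.cong arg_cong[where f=card])
  also have "\<dots> = (\<Sum>e\<in>F. \<Sum>v\<in>\<Union>F. if v \<in> e then 1 else 0)" by (rule sum.swap)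
  also have "\<dots> = (\<Sum>e\<in>F. card e)"
  proof (rule sum.cong)
    fix e assume "e \<in> F"
    then have "\<Union>F \<inter> e = e" by blast
    then show "(\<Sum>v\<in>\<Union>F. if v \<in> e then 1 else 0) = card e" using finU
      by (simp add: sum.If_cases)
  qed simp
  also have "\<dots> = 2 * card F" using assms by simp
  finally show ?thesis .
qed


lemma trunk_mem:
  assumes "u \<in> S" "x \<in> S" "u \<in> fst Tr" "x \<in> fst Tr" "walk (snd Tr) xs" "distinct xs"
    "hd xs = u" "last xs = x" "w \<in> set xs"
  shows "w \<in> trunk S Tr"
  unfolding trunk_def using assms by blast

lemma low_deg_in_S:
  assumes vH: "v \<in> \<Union>H" and Hdef: "H = {e\<in>snd Tr. e \<subseteq> trunk S Tr}" and dg: "dg H v \<le> 1"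
    and fin: "finite (snd Tr)"
  shows "v \<in> S"
proof -
  from vH Hdef obtain e0 where "e0 \<in> snd Tr" "e0 \<subseteq> trunk S Tr" "v \<in> e0" by blast
  then have "v \<in> trunk S Tr" by blast
  then obtain u x xs where ux: "u \<in> S" "x \<in> S" "u \<in> fst Tr" "x \<in> fst Tr"
    and xs: "walk (snd Tr) xs" "distinct xs" "hd xs = u" "last xs = x" "v \<in> set xs"
    unfolding trunk_def by blast
  obtain i where i: "i < length xs" "xs ! i = v" using xs(5) by (meson in_set_conv_nth)
  have ne: "xs \<noteq> []" using xs(1) unfolding walk_def by simp
  show ?thesis
  proof (cases "i = 0")
    case True
    then show ?thesis using i xs(3) ux ne by (metis hd_conv_nth)
  next
    case False
    show ?thesis
    proof (cases "i = length xs - 1")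
      case True
      then show ?thesis using i xs(4) ux ne by (metis last_conv_nth)
    next
      case False2: False
      have i1: "Suc (i - 1) = i" using False by simp
      have i2: "Suc i < length xs" using False2 i by simp
      define e1 where "e1 = {xs ! (i-1), xs ! i}"
      define e2 where "e2 = {xs ! i, xs ! Suc i}"
      have e1T: "e1 \<in> snd Tr" using xs(1) i1 i unfolding walk_def e1_def by (metis)
      have e2T: "e2 \<in> snd Tr" using xs(1) i2 unfolding walk_def e2_def by blast
      have "\<forall>w \<in> set xs. w \<in> trunk S Tr" using trunk_mem[OF ux xs(1-4)] by blast
      then have "e1 \<subseteq> trunk S Tr" "e2 \<subseteq> trunk S Tr"
        unfolding e1_def e2_def using i i2 by auto
      then have "e1 \<in> H" "e2 \<in> H" using e1T e2T Hdef by auto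
      moreover have "e1 \<noteq> e2"
      proof
        assume "e1 = e2"
        then have "xs ! (i-1) \<in> {xs ! i, xs ! Suc i}" unfolding e1_def e2_def by blast
        moreover have "xs ! (i-1) \<noteq> xs ! i" using xs(2) i False nth_eq_iff_index_eq[of xs "i-1" i] by simp
        moreover have "xs ! (i-1) \<noteq> xs ! Suc i" using xs(2) i2 False by (simp add: nth_eq_iff_index_eq)
        ultimately show False by blast
      qed
      moreover have "v \<in> e1" "v \<in> e2" unfolding e1_def e2_def using i by auto
      ultimately have sub: "{e1, e2} \<subseteq> {e\<in>H. v \<in> e}" by blast
      have "finite {e\<in>H. v \<in> e}" using fin Hdef by auto
      then have "card {e1, e2} \<le> dg H v" unfolding dg_def using sub by (simp add: card_mono)
      then show ?thesis using dg \<open>e1 \<noteq> e2\<close> by simp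
    qed
  qed
qed

lemma tree_bound:
  fixes s :: real
  assumes fin: "finite (snd Tr)" and finV: "finite (fst Tr)"
    and two: "\<forall>e\<in>snd Tr. card e = 2" and ac: "\<not> has_cycle (snd Tr)"
    and sub: "\<forall>e\<in>snd Tr. e \<subseteq> fst Tr" and s: "s > 2"
  shows "real (card {v\<in>V. s < real (pdeg S Tr v)}) * (s - 2) \<le> real (card (S \<inter> fst Tr))"
proof -
  define H where "H = {e\<in>snd Tr. e \<subseteq> trunk S Tr}"
  have pd: "pdeg S Tr v = dg H v" for v
    unfolding pdeg_def dg_def H_def by (rule arg_cong[where f=card]) blast
  have finH: "finite H" using fin H_def by auto
  have twoH: "\<forall>e\<in>H. card e = 2" using two H_def by auto
  have acH: "\<not> has_cycle H" using acyc_mono[OF ac] H_def by auto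
  have finU: "finite (\<Union>H)" using finH twoH by (metis card_eq_0_iff finite_Union zero_neq_numeral)
  define A where "A = {v\<in>V. s < real (pdeg S Tr v)}"
  have AU: "A \<subseteq> \<Union>H"
  proof
    fix v assume "v \<in> A"
    then have "dg H v > 0" using s pd unfolding A_def by fastforce
    then have "{e\<in>H. v \<in> e} \<noteq> {}" unfolding dg_def by (metis card.empty less_irrefl)
    then show "v \<in> \<Union>H" by blast
  qed
  show ?thesis
  proof (cases "H = {}")
    case True
    then have "A = {}" using AU by auto
    then show ?thesis unfolding A_def by (metis card.empty of_nat_0 mult_zero_left of_nat_0_le_iff)
  next
    case False
    have fc: "card H + 1 \<le> card (\<Union>H)" using forest_count[OF finH twoH acH False] .
    have ds: "(\<Sum>v\<in>\<Union>H. dg H v) = 2 * card H" using deg_sum[OF finH twoH] .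
    define L where "L = {v\<in>\<Union>H. dg H v = 1}"
    have LS: "L \<subseteq> S \<inter> fst Tr"
    proof
      fix v assume "v \<in> L"
      then have "v \<in> \<Union>H" "dg H v \<le> 1" unfolding L_def by auto
      then have "v \<in> S" using low_deg_in_S[OF _ H_def _ fin] by blast
      moreover have "v \<in> fst Tr" using \<open>v \<in> \<Union>H\<close> sub H_def by blast
      ultimately show "v \<in> S \<inter> fst Tr" by blast
    qed
    have cardL: "card L \<le> card (S \<inter> fst Tr)" using LS finV by (simp add: card_mono)
    have LU: "L \<subseteq> \<Union>H" unfolding L_def by blast
    define g where "g v = real (dg H v) - 2 + (if v \<in> L then 1 else 0)" for v
    have dpos: "dg H v \<ge> 1" if "v \<in> \<Union>H" for v
    proof -
      have "{e\<in>H. v \<in> e} \<noteq> {}" using that by blast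
      moreover have "finite {e\<in>H. v \<in> e}" using finH by simp
      ultimately show ?thesis unfolding dg_def by (simp add: Suc_leI card_gt_0_iff)
    qed
    have gpos: "g v \<ge> 0" if "v \<in> \<Union>H" for v
    proof (cases "dg H v = 1")
      case True
      then show ?thesis using that unfolding g_def L_def by simp
    next
      case False
      then show ?thesis using dpos[OF that] unfolding g_def by simp
    qed
    have gA: "g v \<ge> s - 2" if "v \<in> A" for v
    proof -
      have "s < real (dg H v)" using that pd unfolding A_def by simp
      then show ?thesis unfolding g_def by simp
    qed
    have "(\<Sum>v\<in>\<Union>H. g v) = (\<Sum>v\<in>\<Union>H. real (dg H v)) - 2 * real (card (\<Union>H)) + real (card L)"
    proof -
      have "(\<Sum>v\<in>\<Union>H. (if v \<in> L then 1 else 0::real)) = real (card L)"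
        using finU LU by (simp add: sum.If_cases Int_absorb1)
      then show ?thesis unfolding g_def by (simp add: sum.distrib sum_subtractf)
    qed
    also have "\<dots> = 2 * real (card H) - 2 * real (card (\<Union>H)) + real (card L)"
      using ds by (metis of_nat_mult of_nat_numeral of_nat_sum)
    also have "\<dots> \<le> real (card L)" using fc by simp
    finally have up: "(\<Sum>v\<in>\<Union>H. g v) \<le> real (card L)" .
    have "real (card A) * (s - 2) = (\<Sum>v\<in>A. s - 2)" by simp
    also have "\<dots> \<le> (\<Sum>v\<in>A. g v)" using gA by (intro sum_mono) auto
    also have "\<dots> \<le> (\<Sum>v\<in>\<Union>H. g v)" using AU finU gpos by (intro sum_mono2) auto
    finally show ?thesis using up cardL unfolding A_def by linarith
  qed
qed

lemma double_count:
  assumes "finite S"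
  shows "(\<Sum>r\<in>S. card (S \<inter> f r)) = (\<Sum>u\<in>S. card {r\<in>S. u \<in> f r})"
proof -
  have "(\<Sum>r\<in>S. card (S \<inter> f r)) = (\<Sum>r\<in>S. \<Sum>u\<in>S. if u \<in> f r then 1 else 0)"
    using assms by (auto simp: sum.If_cases intro!: sum.cong arg_cong[where f=card])
  also have "\<dots> = (\<Sum>u\<in>S. \<Sum>r\<in>S. if u \<in> f r then 1 else 0)" by (rule sum.swap)
  also have "\<dots> = (\<Sum>u\<in>S. card {r\<in>S. u \<in> f r})"
    using assms by (auto simp: sum.If_cases intro!: sum.cong arg_cong[where f=card])
  finally show ?thesis .
qed


lemma ln3_ge: "ln (3::real) \<ge> 107/100"
proof -
  have "exp (7/100::real) \<le> 1 + 7/100 + (7/100)\<^sup>2" by (rule exp_bound) auto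
  moreover have "exp (1::real) \<le> 272/100" using e_less_272 by simp
  ultimately have "exp (1::real) * exp (7/100) \<le> 272/100 * (1 + 7/100 + (7/100)\<^sup>2)"
    by (intro mult_mono) auto
  also have "\<dots> \<le> 3" by (simp add: power2_eq_square)
  finally have "exp (107/100::real) \<le> 3" by (simp add: exp_add[symmetric])
  then show ?thesis using ln_ge_iff[of 3 "107/100"] by simp
qed

theorem lemma2p4:
  fixes V :: "'a set" and E :: "'a set set" and w :: "'a set \<Rightarrow> real"
    and S :: "'a set" and T :: "'a \<Rightarrow> 'a set \<times> 'a set set"
    and d :: nat and c :: real
  assumes "wgraph V E w" and "connected_on V E" and "card V \<ge> 3"
    and "d \<ge> 2" and "c \<ge> 1"
    and "S \<subseteq> V"
    and "restricted_tree_cover V E w S T"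
  shows "real (card (Hi V S T (4 * exp 1 * real d powr (c + 1) * (ln (real (card V)))\<^sup>2 + 1)))
           \<le> real (card S) / (2 * real d powr (c + 1))"
proof -
  define n where "n = real (card V)"
  define k where "k = ln n"
  define D where "D = real d powr (c + 1)"
  define s where "s = 4 * exp 1 * D * k\<^sup>2 + 1"
  define K where "K = k * exp 1 * (k + 1)"
  have finV: "finite V" using assms(1) unfolding wgraph_def by simp
  have finE: "finite E"
  proof -
    have "E \<subseteq> Pow V" using assms(1) unfolding wgraph_def by auto
    then show ?thesis using finV by (meson finite_Pow_iff finite_subset)
  qed
  have two: "\<forall>e\<in>E. card e = 2" using assms(1) unfolding wgraph_def by simp
  have finS: "finite S" using finV assms(6) finite_subset by blast
  have n3: "n \<ge> 3" unfolding n_def using assms(3) by simp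
  have k1: "k \<ge> 107/100"
  proof -
    have "ln 3 \<le> ln n" using n3 by simp
    then show ?thesis using ln3_ge unfolding k_def by linarith
  qed
  have npow: "n powr (1 / k) = exp 1"
    using n3 k1 unfolding k_def powr_def by simp
  have R1: "\<forall>r\<in>S. subtree_of V E (T r)" and
    R3: "\<forall>v\<in>V. real (card {r\<in>S. v \<in> fst (T r)}) \<le> K"
    using assms(7) unfolding restricted_tree_cover_def Let_def K_def
    by (simp_all add: n_def[symmetric] k_def[symmetric] npow)
  have D4: "D \<ge> 4"
  proof -
    have "(2::real) powr 2 \<le> 2 powr (c + 1)" using assms(5) by (intro powr_mono) auto
    also have "\<dots> \<le> real d powr (c + 1)" using assms(4,5) by (intro powr_mono2) auto
    finally show ?thesis unfolding D_def by simp
  qed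
  have e2: "exp (1::real) \<ge> 2" using exp_ge_add_one_self[of "1::real"] by simp
  have kk: "k * (k - 1) \<ge> 107/100 * (7/100)" using k1 by (intro mult_mono) auto
  have key0: "2 * exp 1 * D * (k * (k - 1)) \<ge> 2 * 2 * 4 * (107/100 * (7/100))"
    using e2 D4 kk k1 by (intro mult_mono) auto
  have key: "2 * D * K \<le> s - 2"
    using key0 unfolding s_def K_def by (simp add: power2_eq_square algebra_simps)
  have Kp: "K > 0" using k1 unfolding K_def by (intro mult_pos_pos) auto
  have "2 * D * K > 0" using Kp D4 by simp
  then have s2: "s > 2" using key by linarith
  define A where "A r = {v\<in>V. s < real (pdeg S (T r) v)}" for r
  have Abound: "real (card (A r)) * (s - 2) \<le> real (card (S \<inter> fst (T r)))" if "r \<in> S" for r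
  proof -
    have st: "subtree_of V E (T r)" using R1 that by blast
    then have "snd (T r) \<subseteq> E" "fst (T r) \<subseteq> V" "\<forall>e\<in>snd (T r). e \<subseteq> fst (T r)"
      "\<not> has_cycle (snd (T r))" unfolding subtree_of_def by auto
    moreover have "finite (snd (T r))" using finE \<open>snd (T r) \<subseteq> E\<close> by (rule finite_subset[rotated])
    moreover have "finite (fst (T r))" using finV \<open>fst (T r) \<subseteq> V\<close> by (rule finite_subset[rotated])
    moreover have "\<forall>e\<in>snd (T r). card e = 2" using two \<open>snd (T r) \<subseteq> E\<close> by blast
    ultimately show ?thesis unfolding A_def
      using tree_bound[of "T r" s V S] s2 by blast
  qed
  have HiA: "Hi V S T s = (\<Union>r\<in>S. A r)" unfolding Hi_def A_def by auto
  have "card (Hi V S T s) \<le> (\<Sum>r\<in>S. card (A r))" unfolding HiA using finS by (rule card_UN_le)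
  then have "real (card (Hi V S T s)) \<le> real (\<Sum>r\<in>S. card (A r))"
    by (simp only: of_nat_le_iff)
  also have "\<dots> = (\<Sum>r\<in>S. real (card (A r)))" by (rule of_nat_sum)
  finally have "real (card (Hi V S T s)) * (s - 2) \<le> (\<Sum>r\<in>S. real (card (A r))) * (s - 2)"
    by (rule mult_right_mono) (use s2 in simp)
  also have "\<dots> = (\<Sum>r\<in>S. real (card (A r)) * (s - 2))" by (simp add: sum_distrib_right)
  also have "\<dots> \<le> (\<Sum>r\<in>S. real (card (S \<inter> fst (T r))))" using Abound by (intro sum_mono) auto
  also have "\<dots> = (\<Sum>u\<in>S. real (card {r\<in>S. u \<in> fst (T r)}))"
    by (simp only: of_nat_sum[symmetric] double_count[OF finS])
  also have "\<dots> \<le> (\<Sum>u\<in>S. K)" using R3 assms(6) by (intro sum_mono) auto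
  also have "\<dots> = real (card S) * K" by simp
  finally have main: "real (card (Hi V S T s)) * (s - 2) \<le> real (card S) * K" .
  have "real (card (Hi V S T s)) * (s - 2) * (2 * D) \<le> real (card S) * (2 * D * K)"
    using mult_right_mono[OF main, of "2 * D"] D4 by (simp add: algebra_simps)
  also have "\<dots> \<le> real (card S) * (s - 2)" using key by (intro mult_left_mono) auto
  finally have "real (card (Hi V S T s)) * (2 * D) \<le> real (card S)" using s2 by simp
  then have "real (card (Hi V S T s)) \<le> real (card S) / (2 * D)" using D4 by (simp add: field_simps)
  then show ?thesis unfolding s_def D_def k_def n_def .
qed

end
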